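(* Let $k\geq 3$, $0\leq\epsilon\leq\frac12$ and $0<c<1$. Let \[ r=\frac{1}{\max\{4\epsilon(1-\epsilon),\ \epsilon^2+(1-\epsilon)^2\}}\cdot\frac{c}{\binom{k}{2}}, \] and let $\Phi$ be a random instance of $\epsilon$-1-in-$k$ SAT on $n$ variables drawn from the constant probability model with parameter $p=p(n)$ satisfying $p\binom{n}{k}=rn$. For each $n$ let $(A_n,B_n)\in\{0,1\}^n\times\{0,1\}^n$ be a pair of assignments satisfying \[ 2\cdot\big[\mathrm{overlap}(A_n,B_n)\,(1-\epsilon)\big]^{k-2}\leq 1 . \] Then there exists $\lambda_{c,\epsilon}>0$ such that for all sufficiently large $n$, \[ \Pr\big[(A_n,B_n)\text{ is not }\lambda_{c,\epsilon}\log n\text{-connected}\ \big|\ A_n\models\Phi\text{ and }B_n\models\Phi\big]<\frac1n . \]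
   Context: Let $\epsilon\in[0,1/2]$. An instance of $\epsilon$-1-in-$k$ SAT on variables $x_1,\dots,x_n$ is a conjunction of clauses, each consisting of exactly $k$ literals on $k$ distinct variables; an assignment $A\in\{0,1\}^n$ satisfies it ($A\models\Phi$) if in every clause exactly one literal is true. In the constant probability model with parameter $p$, each of the possible clauses (a set of $k$ distinct variables with a sign for each) that has $i$ negated and $j$ unnegated literals ($i+j=k$) is included independently with probability $p\,\epsilon^{i}(1-\epsilon)^{j}$. The overlap of two assignments $A,B$ is $\mathrm{overlap}(A,B)=|\{i: A(x_i)=B(x_i)\}|/n$. For an integer $l\geq1$, two satisfying assignments $A,B$ of $\Phi$ are $l$-connected if there is a sequence of satisfying assignments $A_0=A,\dots,A_r=B$ of $\Phi$ with consecutive ones at Hamming distance at most $l$. *)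

theory Defs
  imports Complex_Main
begin

text \<open>Variables are the naturals 0..n-1. A literal is a pair (i, b): b = True means the
  unnegated literal x_i, b = False the negated literal. A clause is a set of k literals on
  k distinct variables.\<close>

definition clauses :: "nat \<Rightarrow> nat \<Rightarrow> (nat \<times> bool) set set" where
  "clauses n k = {C. C \<subseteq> {0..<n} \<times> UNIV \<and> card C = k \<and> inj_on fst C}"

definition assignments :: "nat \<Rightarrow> (nat \<Rightarrow> bool) set" where
  "assignments n = {A. \<forall>i\<ge>n. \<not> A i}"

definition lit_true :: "(nat \<Rightarrow> bool) \<Rightarrow> nat \<times> bool \<Rightarrow> bool" where
  "lit_true A l = (A (fst l) = snd l)"

definition sat :: "(nat \<Rightarrow> bool) \<Rightarrow> (nat \<times> bool) set set \<Rightarrow> bool" where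
  "sat A \<Phi> = (\<forall>C\<in>\<Phi>. card {l\<in>C. lit_true A l} = 1)"

definition clause_prob :: "real \<Rightarrow> real \<Rightarrow> (nat \<times> bool) set \<Rightarrow> real" where
  "clause_prob p \<epsilon> C = p * \<epsilon> ^ card {l\<in>C. \<not> snd l} * (1 - \<epsilon>) ^ card {l\<in>C. snd l}"

definition instance_prob :: "nat \<Rightarrow> nat \<Rightarrow> real \<Rightarrow> real \<Rightarrow> (nat \<times> bool) set set \<Rightarrow> real" where
  "instance_prob n k p \<epsilon> \<Phi> =
     (\<Prod>C\<in>\<Phi>. clause_prob p \<epsilon> C) * (\<Prod>C\<in>clauses n k - \<Phi>. 1 - clause_prob p \<epsilon> C)"

definition prob_inst :: "nat \<Rightarrow> nat \<Rightarrow> real \<Rightarrow> real \<Rightarrow> ((nat \<times> bool) set set \<Rightarrow> bool) \<Rightarrow> real" where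
  "prob_inst n k p \<epsilon> E = (\<Sum>\<Phi>\<in>{\<Phi>. \<Phi> \<subseteq> clauses n k \<and> E \<Phi>}. instance_prob n k p \<epsilon> \<Phi>)"

definition cond_prob_inst :: "nat \<Rightarrow> nat \<Rightarrow> real \<Rightarrow> real \<Rightarrow> ((nat \<times> bool) set set \<Rightarrow> bool)
    \<Rightarrow> ((nat \<times> bool) set set \<Rightarrow> bool) \<Rightarrow> real" where
  "cond_prob_inst n k p \<epsilon> E F = prob_inst n k p \<epsilon> (\<lambda>\<Phi>. E \<Phi> \<and> F \<Phi>) / prob_inst n k p \<epsilon> F"

definition hamming :: "nat \<Rightarrow> (nat \<Rightarrow> bool) \<Rightarrow> (nat \<Rightarrow> bool) \<Rightarrow> nat" where
  "hamming n A B = card {i. i < n \<and> A i \<noteq> B i}"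

definition overlap :: "nat \<Rightarrow> (nat \<Rightarrow> bool) \<Rightarrow> (nat \<Rightarrow> bool) \<Rightarrow> real" where
  "overlap n A B = real (card {i. i < n \<and> A i = B i}) / real n"

definition connected :: "nat \<Rightarrow> (nat \<times> bool) set set \<Rightarrow> real \<Rightarrow> (nat \<Rightarrow> bool) \<Rightarrow> (nat \<Rightarrow> bool) \<Rightarrow> bool" where
  "connected n \<Phi> l A B =
     (\<exists>xs. xs \<noteq> [] \<and> hd xs = A \<and> last xs = B \<and>
        (\<forall>X\<in>set xs. X \<in> assignments n \<and> sat X \<Phi>) \<and>
        (\<forall>i < length xs - 1. real (hamming n (xs ! i) (xs ! Suc i)) \<le> l))"

end

theory Submission
  imports Defs
begin


definition wt :: "('c \<Rightarrow> real) \<Rightarrow> 'c set \<Rightarrow> 'c set \<Rightarrow> real" where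
  "wt q Y \<Phi> = (\<Prod>C\<in>\<Phi>. q C) * (\<Prod>C\<in>Y-\<Phi>. 1 - q C)"

lemma wt_sum1: "finite Y \<Longrightarrow> (\<Sum>\<Phi>\<in>Pow Y. wt q Y \<Phi>) = 1"
  using prod_add[of Y q "\<lambda>C. 1 - q C"] by (simp add: wt_def)

lemma wt_nonneg: "(\<And>C. C \<in> Y \<Longrightarrow> 0 \<le> q C \<and> q C \<le> 1) \<Longrightarrow> \<Phi> \<subseteq> Y \<Longrightarrow> 0 \<le> wt q Y \<Phi>"
  unfolding wt_def by (intro mult_nonneg_nonneg prod_nonneg) auto

lemma wt_union:
  assumes "Y1 \<inter> Y2 = {}" "\<Phi>1 \<subseteq> Y1" "\<Phi>2 \<subseteq> Y2" "finite Y1" "finite Y2"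
  shows "wt q (Y1 \<union> Y2) (\<Phi>1 \<union> \<Phi>2) = wt q Y1 \<Phi>1 * wt q Y2 \<Phi>2"
proof -
  have f: "finite \<Phi>1" "finite \<Phi>2" using assms by (auto intro: finite_subset)
  have e: "(Y1 \<union> Y2) - (\<Phi>1 \<union> \<Phi>2) = (Y1 - \<Phi>1) \<union> (Y2 - \<Phi>2)" using assms by auto
  have "(\<Prod>C\<in>\<Phi>1 \<union> \<Phi>2. q C) = (\<Prod>C\<in>\<Phi>1. q C) * (\<Prod>C\<in>\<Phi>2. q C)"
    using f assms by (intro prod.union_disjoint) auto
  moreover have "(\<Prod>C\<in>(Y1 - \<Phi>1) \<union> (Y2 - \<Phi>2). 1 - q C) = (\<Prod>C\<in>Y1 - \<Phi>1. 1 - q C) * (\<Prod>C\<in>Y2 - \<Phi>2. 1 - q C)"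
    using assms by (intro prod.union_disjoint) auto
  ultimately show ?thesis unfolding wt_def e by (simp add: algebra_simps)
qed

lemma wt_split:
  assumes "Y1 \<inter> Y2 = {}" "finite Y1" "finite Y2"
  shows "(\<Sum>\<Phi>\<in>Pow (Y1 \<union> Y2). wt q (Y1 \<union> Y2) \<Phi> * f \<Phi>) =
         (\<Sum>\<Phi>1\<in>Pow Y1. wt q Y1 \<Phi>1 * (\<Sum>\<Phi>2\<in>Pow Y2. wt q Y2 \<Phi>2 * f (\<Phi>1 \<union> \<Phi>2)))"
proof -
  have bij: "bij_betw (\<lambda>(a,b). a \<union> b) (Pow Y1 \<times> Pow Y2) (Pow (Y1 \<union> Y2))"
  proof (rule bij_betw_imageI)
    show "inj_on (\<lambda>(a,b). a \<union> b) (Pow Y1 \<times> Pow Y2)"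
    proof (rule inj_onI, clarify)
      fix a b a' b' assume h: "a \<subseteq> Y1" "b \<subseteq> Y2" "a' \<subseteq> Y1" "b' \<subseteq> Y2" "a \<union> b = a' \<union> b'"
      have "a = (a \<union> b) \<inter> Y1" "a' = (a' \<union> b') \<inter> Y1" "b = (a \<union> b) \<inter> Y2" "b' = (a' \<union> b') \<inter> Y2"
        using h assms(1) by auto
      then show "a = a' \<and> b = b'" using h(5) by metis
    qed
    show "(\<lambda>(a,b). a \<union> b) ` (Pow Y1 \<times> Pow Y2) = Pow (Y1 \<union> Y2)"
    proof
      show "(\<lambda>(a,b). a \<union> b) ` (Pow Y1 \<times> Pow Y2) \<subseteq> Pow (Y1 \<union> Y2)" by auto
      show "Pow (Y1 \<union> Y2) \<subseteq> (\<lambda>(a,b). a \<union> b) ` (Pow Y1 \<times> Pow Y2)"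
      proof
        fix X assume "X \<in> Pow (Y1 \<union> Y2)"
        then have "X = (\<lambda>(a,b). a \<union> b) (X \<inter> Y1, X \<inter> Y2)" "(X \<inter> Y1, X \<inter> Y2) \<in> Pow Y1 \<times> Pow Y2" by auto
        then show "X \<in> (\<lambda>(a,b). a \<union> b) ` (Pow Y1 \<times> Pow Y2)" by blast
      qed
    qed
  qed
  have "(\<Sum>\<Phi>\<in>Pow (Y1 \<union> Y2). wt q (Y1 \<union> Y2) \<Phi> * f \<Phi>) =
        (\<Sum>(a,b)\<in>Pow Y1 \<times> Pow Y2. wt q (Y1 \<union> Y2) (a \<union> b) * f (a \<union> b))"
    using sum.reindex_bij_betw[OF bij, of "\<lambda>\<Phi>. wt q (Y1 \<union> Y2) \<Phi> * f \<Phi>"]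
    by (simp add: case_prod_unfold)
  also have "\<dots> = (\<Sum>(a,b)\<in>Pow Y1 \<times> Pow Y2. wt q Y1 a * (wt q Y2 b * f (a \<union> b)))"
    using assms by (intro sum.cong refl) (auto simp: wt_union)
  also have "\<dots> = (\<Sum>\<Phi>1\<in>Pow Y1. wt q Y1 \<Phi>1 * (\<Sum>\<Phi>2\<in>Pow Y2. wt q Y2 \<Phi>2 * f (\<Phi>1 \<union> \<Phi>2)))"
    by (simp add: sum.cartesian_product[symmetric] sum_distrib_left)
  finally show ?thesis .
qed

lemma wt_pow:
  assumes "finite Y" "Z \<subseteq> Y"
  shows "(\<Sum>\<Phi>\<in>Pow Y. wt q Y \<Phi> * g ^ card (\<Phi> \<inter> Z)) = (\<Prod>C\<in>Z. 1 + q C * (g - 1))"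
proof -
  define h where "h C = (if C \<in> Z then g else 1)" for C
  have fZ: "finite Z" using assms finite_subset by auto
  have "(\<Prod>C\<in>Y. q C * h C + (1 - q C)) = (\<Sum>X\<in>Pow Y. (\<Prod>C\<in>X. q C * h C) * (\<Prod>C\<in>Y-X. 1 - q C))"
    by (rule prod_add[OF assms(1)])
  also have "\<dots> = (\<Sum>\<Phi>\<in>Pow Y. wt q Y \<Phi> * g ^ card (\<Phi> \<inter> Z))"
  proof (intro sum.cong refl)
    fix X assume X: "X \<in> Pow Y"
    have fX: "finite X" using X assms finite_subset by auto
    have "(\<Prod>C\<in>X. h C) = g ^ card (X \<inter> Z)"
      unfolding h_def using fX by (simp add: prod.If_cases)
    then show "(\<Prod>C\<in>X. q C * h C) * (\<Prod>C\<in>Y-X. 1 - q C) = wt q Y X * g ^ card (X \<inter> Z)"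
      unfolding wt_def by (simp add: prod.distrib)
  qed
  finally have 1: "(\<Sum>\<Phi>\<in>Pow Y. wt q Y \<Phi> * g ^ card (\<Phi> \<inter> Z)) = (\<Prod>C\<in>Y. q C * h C + (1 - q C))" by simp
  have "(\<Prod>C\<in>Y. q C * h C + (1 - q C)) = (\<Prod>C\<in>Z. q C * h C + (1 - q C)) * (\<Prod>C\<in>Y-Z. q C * h C + (1 - q C))"
    using prod.subset_diff[OF assms(2) assms(1)] by (simp add: mult.commute)
  also have "\<dots> = (\<Prod>C\<in>Z. 1 + q C * (g - 1))"
    unfolding h_def by (simp add: algebra_simps)
  finally show ?thesis using 1 by simp
qed



definition adj :: "(nat \<times> bool) set set \<Rightarrow> nat \<Rightarrow> nat \<Rightarrow> bool" where
  "adj \<Phi> a b = (a \<noteq> b \<and> (\<exists>C\<in>\<Phi>. a \<in> fst ` C \<and> b \<in> fst ` C))"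

definition rel :: "(nat \<times> bool) set set \<Rightarrow> nat set \<Rightarrow> nat \<Rightarrow> nat \<Rightarrow> bool" where
  "rel \<Phi> S a b = (a \<in> S \<and> b \<in> S \<and> adj \<Phi> a b)"

definition reach :: "(nat \<times> bool) set set \<Rightarrow> nat set \<Rightarrow> nat set \<Rightarrow> nat set" where
  "reach \<Phi> S U = {w. \<exists>u\<in>U. (rel \<Phi> S)\<^sup>*\<^sup>* u w}"

lemma adj_sym: "adj \<Phi> a b \<Longrightarrow> adj \<Phi> b a"
  unfolding adj_def by blast

lemma rel_star_mem: "(rel \<Phi> S)\<^sup>*\<^sup>* u w \<Longrightarrow> w = u \<or> w \<in> S"
  by (induction rule: rtranclp_induct) (auto simp: rel_def)

lemma reach_sub: "reach \<Phi> S U \<subseteq> U \<union> S"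
  unfolding reach_def using rel_star_mem by blast

lemma reach_empty[simp]: "reach \<Phi> S {} = {}"
  unfolding reach_def by auto

lemma reach_mono_rel:
  assumes "\<And>a b. rel \<Phi> S a b \<Longrightarrow> rel \<Phi>' S' a b"
  shows "(rel \<Phi> S)\<^sup>*\<^sup>* u w \<Longrightarrow> (rel \<Phi>' S')\<^sup>*\<^sup>* u w"
  by (induction rule: rtranclp_induct) (auto intro: rtranclp.rtrancl_into_rtrancl assms)

lemma reach_rec:
  assumes u: "u \<in> U" and US: "U \<subseteq> S"
  shows "reach \<Phi> S U = insert u (reach \<Phi> (S - {u}) ((U - {u}) \<union> {w\<in>S-{u}. adj \<Phi> u w}))"
    (is "_ = insert u (reach \<Phi> ?S' ?W)")
proof
  show "reach \<Phi> S U \<subseteq> insert u (reach \<Phi> ?S' ?W)"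
  proof
    fix w assume "w \<in> reach \<Phi> S U"
    then obtain u0 where u0: "u0 \<in> U" "(rel \<Phi> S)\<^sup>*\<^sup>* u0 w" unfolding reach_def by blast
    from u0(2) show "w \<in> insert u (reach \<Phi> ?S' ?W)"
    proof (induction rule: rtranclp_induct)
      case base
      then show ?case using u0(1) by (cases "u0 = u") (auto simp: reach_def)
    next
      case (step y z)
      show ?case
      proof (cases "z = u")
        case True then show ?thesis by simp
      next
        case False
        show ?thesis
        proof (cases "y = u")
          case True
          then have "z \<in> ?W" using step(2) False by (auto simp: rel_def)
          then show ?thesis by (auto simp: reach_def)
        next
          case yne: False
          with step(3) obtain u1 where "u1 \<in> ?W" "(rel \<Phi> ?S')\<^sup>*\<^sup>* u1 y" by (auto simp: reach_def)
          moreover have "rel \<Phi> ?S' y z" using step(2) yne False by (auto simp: rel_def)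
          ultimately show ?thesis by (auto simp: reach_def intro: rtranclp.rtrancl_into_rtrancl)
        qed
      qed
    qed
  qed
  show "insert u (reach \<Phi> ?S' ?W) \<subseteq> reach \<Phi> S U"
  proof
    fix w assume "w \<in> insert u (reach \<Phi> ?S' ?W)"
    then consider "w = u" | u1 where "u1 \<in> ?W" "(rel \<Phi> ?S')\<^sup>*\<^sup>* u1 w" by (auto simp: reach_def)
    then show "w \<in> reach \<Phi> S U"
    proof cases
      case 1 then show ?thesis using u by (auto simp: reach_def)
    next
      case 2
      have p: "(rel \<Phi> S)\<^sup>*\<^sup>* u1 w"
        by (rule reach_mono_rel[OF _ 2(2)]) (auto simp: rel_def)
      show ?thesis
      proof (cases "u1 \<in> U")
        case True then show ?thesis using p by (auto simp: reach_def)
      next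
        case False
        then have "rel \<Phi> S u u1" using 2(1) u US by (auto simp: rel_def)
        then have "(rel \<Phi> S)\<^sup>*\<^sup>* u w" using p by (meson converse_rtranclp_into_rtranclp)
        then show ?thesis using u by (auto simp: reach_def)
      qed
    qed
  qed
qed

lemma reach_cong:
  assumes "\<And>a b. a \<in> S \<Longrightarrow> b \<in> S \<Longrightarrow> adj \<Phi> a b = adj \<Phi>' a b"
  shows "reach \<Phi> S W = reach \<Phi>' S W"
proof -
  have "rel \<Phi> S = rel \<Phi>' S" using assms by (auto simp: rel_def fun_eq_iff)
  then show ?thesis by (simp add: reach_def)
qed



lemma prod_exp_bound:
  fixes q :: "'a \<Rightarrow> real" and g :: real
  assumes "finite Z" "\<And>C. C \<in> Z \<Longrightarrow> 0 \<le> q C" "g \<ge> 1"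
  shows "(\<Prod>C\<in>Z. 1 + q C * (g - 1)) \<le> exp ((g - 1) * (\<Sum>C\<in>Z. q C))"
proof -
  have "(\<Prod>C\<in>Z. 1 + q C * (g - 1)) \<le> (\<Prod>C\<in>Z. exp (q C * (g - 1)))"
  proof (rule prod_mono[of Z "\<lambda>C. 1 + q C * (g - 1)" "\<lambda>C. exp (q C * (g - 1))"])
    fix C assume "C \<in> Z"
    then have "0 \<le> q C * (g - 1)" using assms by auto
    then show "0 \<le> 1 + q C * (g - 1) \<and> 1 + q C * (g - 1) \<le> exp (q C * (g - 1))" by auto
  qed
  also have "\<dots> = exp (\<Sum>C\<in>Z. q C * (g - 1))" using assms(1) by (simp add: exp_sum)
  finally show ?thesis by (simp add: sum_distrib_left mult.commute)
qed

lemma card_three: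
  assumes "finite X" "a \<in> X" "b \<in> X" "c \<in> X" "a \<noteq> b" "a \<noteq> c" "b \<noteq> c"
  shows "card X \<ge> 3"
proof -
  have "card {a,b,c} \<le> card X" using assms by (intro card_mono) auto
  then show ?thesis using assms by simp
qed

definition hyps :: "nat set \<Rightarrow> real \<Rightarrow> ((nat \<times> bool) set \<Rightarrow> real) \<Rightarrow> (nat \<times> bool) set set \<Rightarrow> bool" where
  "hyps D \<mu> q Y \<longleftrightarrow> finite Y \<and> (\<forall>C\<in>Y. 0 \<le> q C \<and> q C \<le> 1) \<and> (\<forall>C\<in>Y. card (fst ` C \<inter> D) \<le> 2)
     \<and> (\<forall>u\<in>D. (\<Sum>C\<in>{C\<in>Y. u \<in> fst ` C \<and> (\<exists>w\<in>D-{u}. w \<in> fst ` C)}. q C) \<le> \<mu>)"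

lemma hyps_sub:
  assumes "hyps D \<mu> q Y" "Y' \<subseteq> Y" shows "hyps D \<mu> q Y'"
proof -
  have fY: "finite Y" using assms unfolding hyps_def by auto
  have "(\<Sum>C\<in>{C\<in>Y'. u \<in> fst ` C \<and> (\<exists>w\<in>D-{u}. w \<in> fst ` C)}. q C)
      \<le> (\<Sum>C\<in>{C\<in>Y. u \<in> fst ` C \<and> (\<exists>w\<in>D-{u}. w \<in> fst ` C)}. q C)" for u
    using assms fY unfolding hyps_def by (intro sum_mono2) auto
  then show ?thesis using assms finite_subset[OF assms(2) fY] unfolding hyps_def
    by (meson order_trans subsetD)
qed

lemma moment:
  assumes finD: "finite D" and G: "G \<ge> 1" and x: "x \<ge> 0" and xG: "x * exp (\<mu> * (G - 1)) \<le> G"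
  shows "hyps D \<mu> q Y \<Longrightarrow> S \<subseteq> D \<Longrightarrow> U \<subseteq> S \<Longrightarrow>
     (\<Sum>\<Phi>\<in>Pow Y. wt q Y \<Phi> * x ^ card (reach \<Phi> S U)) \<le> G ^ card U"
proof (induction "card S" arbitrary: S U Y rule: less_induct)
  case less
  note H = less.prems(1)[unfolded hyps_def]
  have fY: "finite Y" using H by auto
  have fS: "finite S" using less.prems finD finite_subset by auto
  show ?case
  proof (cases "U = {}")
    case True
    then show ?thesis using wt_sum1[OF fY, of q] by simp
  next
    case False
    then obtain u where u: "u \<in> U" by blast
    have uD: "u \<in> D" using u less.prems by auto
    define Y1 where "Y1 = {C\<in>Y. u \<in> fst ` C}"
    define Y2 where "Y2 = Y - Y1"
    define N where "N \<Phi>1 = {w\<in>S-{u}. adj \<Phi>1 u w}" for \<Phi>1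
    define W where "W \<Phi>1 = (U - {u}) \<union> N \<Phi>1" for \<Phi>1
    define Z where "Z = {C\<in>Y1. \<exists>w\<in>D-{u}. w \<in> fst ` C}"
    have YY: "Y = Y1 \<union> Y2" "Y1 \<inter> Y2 = {}" unfolding Y1_def Y2_def by auto
    have fY12: "finite Y1" "finite Y2" using fY YY by auto
    have hY2: "hyps D \<mu> q Y2" using hyps_sub[OF less.prems(1)] YY by auto
    have q01: "0 \<le> q C" "q C \<le> 1" if "C \<in> Y" for C using H that by auto
    have fUD: "finite (fst ` C \<inter> D)" for C using finD by auto
    have A: "reach (\<Phi>1 \<union> \<Phi>2) S U = insert u (reach \<Phi>2 (S - {u}) (W \<Phi>1))"
      if "\<Phi>1 \<subseteq> Y1" "\<Phi>2 \<subseteq> Y2" for \<Phi>1 \<Phi>2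
    proof -
      have "{w\<in>S-{u}. adj (\<Phi>1 \<union> \<Phi>2) u w} = N \<Phi>1"
        using that unfolding N_def adj_def Y2_def Y1_def by auto
      moreover have "reach (\<Phi>1 \<union> \<Phi>2) (S - {u}) (W \<Phi>1) = reach \<Phi>2 (S - {u}) (W \<Phi>1)"
      proof (rule reach_cong)
        fix a b assume ab: "a \<in> S - {u}" "b \<in> S - {u}"
        show "adj (\<Phi>1 \<union> \<Phi>2) a b = adj \<Phi>2 a b"
        proof
          assume "adj (\<Phi>1 \<union> \<Phi>2) a b"
          then obtain C where C: "C \<in> \<Phi>1 \<union> \<Phi>2" "a \<in> fst ` C" "b \<in> fst ` C" "a \<noteq> b" unfolding adj_def by auto
          show "adj \<Phi>2 a b"
          proof (cases "C \<in> \<Phi>1")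
            case True
            then have "C \<in> Y" "u \<in> fst ` C" using that unfolding Y1_def by auto
            then have "card (fst ` C \<inter> D) \<ge> 3"
              using C ab less.prems(2) uD by (intro card_three[OF fUD[of C], of a b u]) auto
            then show ?thesis using H \<open>C \<in> Y\<close> by fastforce
          next
            case False then show ?thesis using C unfolding adj_def by auto
          qed
        qed (auto simp: adj_def)
      qed
      ultimately show ?thesis
        using reach_rec[OF u less.prems(3), of "\<Phi>1 \<union> \<Phi>2"] unfolding W_def by simp
    qed
    have B: "card (reach (\<Phi>1 \<union> \<Phi>2) S U) = Suc (card (reach \<Phi>2 (S - {u}) (W \<Phi>1)))"
      if "\<Phi>1 \<subseteq> Y1" "\<Phi>2 \<subseteq> Y2" for \<Phi>1 \<Phi>2
    proof -
      have sub: "reach \<Phi>2 (S - {u}) (W \<Phi>1) \<subseteq> S - {u}"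
        using reach_sub[of \<Phi>2 "S - {u}" "W \<Phi>1"] less.prems(3) unfolding W_def N_def by auto
      then have "finite (reach \<Phi>2 (S - {u}) (W \<Phi>1))" using fS finite_subset by blast
      moreover have "u \<notin> reach \<Phi>2 (S - {u}) (W \<Phi>1)" using sub by auto
      ultimately show ?thesis using A[OF that] by simp
    qed
    have WS: "W \<Phi>1 \<subseteq> S - {u}" for \<Phi>1 using less.prems(3) unfolding W_def N_def by auto
    have C: "(\<Sum>\<Phi>2\<in>Pow Y2. wt q Y2 \<Phi>2 * x ^ card (reach \<Phi>2 (S - {u}) (W \<Phi>1))) \<le> G ^ card (W \<Phi>1)" for \<Phi>1
    proof (rule less.hyps)
      show "card (S - {u}) < card S" using fS u less.prems(3) by (meson card_Diff1_less subsetD)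
    qed (use hY2 less.prems WS in auto)
    have Dc: "card (W \<Phi>1) \<le> (card U - 1) + card (\<Phi>1 \<inter> Z)" if "\<Phi>1 \<subseteq> Y1" for \<Phi>1
    proof -
      have fin1: "finite \<Phi>1" using that fY12 finite_subset by auto
      have "N \<Phi>1 \<subseteq> (\<Union>C\<in>\<Phi>1 \<inter> Z. fst ` C \<inter> D - {u})"
      proof
        fix w assume "w \<in> N \<Phi>1"
        then obtain C where "C \<in> \<Phi>1" "u \<in> fst ` C" "w \<in> fst ` C" "w \<noteq> u" "w \<in> S"
          unfolding N_def adj_def by auto
        then show "w \<in> (\<Union>C\<in>\<Phi>1 \<inter> Z. fst ` C \<inter> D - {u})"
          using that less.prems(2) unfolding Z_def by blast
      qed
      then have "card (N \<Phi>1) \<le> card (\<Union>C\<in>\<Phi>1 \<inter> Z. fst ` C \<inter> D - {u})"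
        using finD by (intro card_mono) auto
      also have "\<dots> \<le> (\<Sum>C\<in>\<Phi>1 \<inter> Z. card (fst ` C \<inter> D - {u}))" by (rule card_UN_le) (use fin1 in auto)
      also have "\<dots> \<le> (\<Sum>C\<in>\<Phi>1 \<inter> Z. 1)"
      proof (intro sum_mono)
        fix C assume "C \<in> \<Phi>1 \<inter> Z"
        then have "C \<in> Y" "u \<in> fst ` C \<inter> D" using that uD unfolding Z_def Y1_def by auto
        moreover have "card (fst ` C \<inter> D) \<le> 2" using H \<open>C \<in> Y\<close> by auto
        ultimately show "card (fst ` C \<inter> D - {u}) \<le> 1" using fUD[of C] by (simp add: card_Diff_singleton)
      qed
      finally have "card (N \<Phi>1) \<le> card (\<Phi>1 \<inter> Z)" by simp
      moreover have "card (W \<Phi>1) \<le> card (U - {u}) + card (N \<Phi>1)" unfolding W_def by (rule card_Un_le)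
      moreover have "card (U - {u}) = card U - 1" using u by simp
      ultimately show ?thesis by linarith
    qed
    have ZY1: "Z \<subseteq> Y1" unfolding Z_def by auto
    have "(\<Sum>\<Phi>\<in>Pow Y. wt q Y \<Phi> * x ^ card (reach \<Phi> S U))
        = (\<Sum>\<Phi>1\<in>Pow Y1. wt q Y1 \<Phi>1 * (\<Sum>\<Phi>2\<in>Pow Y2. wt q Y2 \<Phi>2 * x ^ card (reach (\<Phi>1 \<union> \<Phi>2) S U)))"
      unfolding YY(1) by (rule wt_split[OF YY(2) fY12])
    also have "\<dots> = (\<Sum>\<Phi>1\<in>Pow Y1. wt q Y1 \<Phi>1 * (x * (\<Sum>\<Phi>2\<in>Pow Y2. wt q Y2 \<Phi>2 * x ^ card (reach \<Phi>2 (S - {u}) (W \<Phi>1)))))"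
      by (intro sum.cong refl arg_cong2[where f="(*)"]) (auto simp: B sum_distrib_left algebra_simps intro!: sum.cong)
    also have "\<dots> \<le> (\<Sum>\<Phi>1\<in>Pow Y1. wt q Y1 \<Phi>1 * (x * G ^ card (W \<Phi>1)))"
    proof (intro sum_mono mult_left_mono)
      fix \<Phi>1 assume "\<Phi>1 \<in> Pow Y1"
      then show "0 \<le> wt q Y1 \<Phi>1" using q01 by (intro wt_nonneg) (auto simp: Y1_def)
    qed (use C x in auto)
    also have "\<dots> \<le> (\<Sum>\<Phi>1\<in>Pow Y1. wt q Y1 \<Phi>1 * ((x * G ^ (card U - 1)) * G ^ card (\<Phi>1 \<inter> Z)))"
    proof (intro sum_mono mult_left_mono)
      fix \<Phi>1 assume "\<Phi>1 \<in> Pow Y1"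
      then show "0 \<le> wt q Y1 \<Phi>1" using q01 by (intro wt_nonneg) (auto simp: Y1_def)
      have "G ^ card (W \<Phi>1) \<le> G ^ ((card U - 1) + card (\<Phi>1 \<inter> Z))"
        using Dc \<open>\<Phi>1 \<in> Pow Y1\<close> G by (intro power_increasing) auto
      then show "x * G ^ card (W \<Phi>1) \<le> x * G ^ (card U - 1) * G ^ card (\<Phi>1 \<inter> Z)"
        using x by (simp add: power_add mult.assoc mult_left_mono)
    qed
    also have "\<dots> = (x * G ^ (card U - 1)) * (\<Sum>\<Phi>1\<in>Pow Y1. wt q Y1 \<Phi>1 * G ^ card (\<Phi>1 \<inter> Z))"
      by (simp add: sum_distrib_left algebra_simps)
    also have "\<dots> = (x * G ^ (card U - 1)) * (\<Prod>C\<in>Z. 1 + q C * (G - 1))"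
      by (simp add: wt_pow[OF fY12(1) ZY1])
    also have "\<dots> \<le> (x * G ^ (card U - 1)) * exp ((G - 1) * (\<Sum>C\<in>Z. q C))"
      using ZY1 fY12 q01 G x unfolding Y1_def
      by (intro mult_left_mono prod_exp_bound) (auto intro: finite_subset)
    also have "\<dots> \<le> (x * G ^ (card U - 1)) * exp ((G - 1) * \<mu>)"
    proof -
      have "(\<Sum>C\<in>Z. q C) \<le> \<mu>" using H uD unfolding Z_def Y1_def
        by (smt (verit, ccfv_SIG) Collect_cong mem_Collect_eq)
      then show ?thesis using G x by (intro mult_left_mono) (auto intro: mult_left_mono)
    qed
    also have "\<dots> = G ^ (card U - 1) * (x * exp (\<mu> * (G - 1)))" by (simp add: algebra_simps)
    also have "\<dots> \<le> G ^ (card U - 1) * G" using xG G by (intro mult_left_mono) auto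
    also have "\<dots> = G ^ card U"
      using u fS less.prems(3) finite_subset[OF less.prems(3) fS]
      by (metis One_nat_def Suc_pred card_gt_0_iff emptyE power_Suc2)
    finally show ?thesis .
  qed
qed



definition mix :: "nat set \<Rightarrow> (nat \<Rightarrow> bool) \<Rightarrow> (nat \<Rightarrow> bool) \<Rightarrow> nat \<Rightarrow> bool" where
  "mix T A B = (\<lambda>i. if i \<in> T then B i else A i)"

definition closedD :: "(nat \<times> bool) set set \<Rightarrow> nat set \<Rightarrow> nat set \<Rightarrow> bool" where
  "closedD \<Phi> D T = (\<forall>a\<in>T. \<forall>b\<in>D. adj \<Phi> a b \<longrightarrow> b \<in> T)"

lemma sat_mix:
  assumes D: "D = {i. i < n \<and> A i \<noteq> B i}" and TD: "T \<subseteq> D" and cl: "closedD \<Phi> D T"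
    and \<Phi>: "\<Phi> \<subseteq> clauses n k" and sA: "sat A \<Phi>" and sB: "sat B \<Phi>"
  shows "sat (mix T A B) \<Phi>"
  unfolding sat_def
proof
  fix C assume C: "C \<in> \<Phi>"
  then have "C \<subseteq> {0..<n} \<times> UNIV" using \<Phi> unfolding clauses_def by auto
  then have Cn: "\<And>l. l \<in> C \<Longrightarrow> fst l < n" by auto
  show "card {l\<in>C. lit_true (mix T A B) l} = 1"
  proof (cases "\<exists>l\<in>C. fst l \<in> T")
    case True
    then obtain l0 where l0: "l0 \<in> C" "fst l0 \<in> T" by blast
    have "lit_true (mix T A B) l = lit_true B l" if "l \<in> C" for l
    proof (cases "fst l \<in> T")
      case True then show ?thesis by (simp add: lit_true_def mix_def)
    next
      case False
      have "fst l \<notin> D"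
      proof
        assume "fst l \<in> D"
        moreover have "fst l0 \<noteq> fst l" using False l0 by auto
        moreover have "adj \<Phi> (fst l0) (fst l)" using C l0 that calculation unfolding adj_def by blast
        ultimately show False using cl l0 False unfolding closedD_def by blast
      qed
      then have "A (fst l) = B (fst l)" using Cn[OF that] D by auto
      then show ?thesis using False by (simp add: lit_true_def mix_def)
    qed
    then have "{l\<in>C. lit_true (mix T A B) l} = {l\<in>C. lit_true B l}" by auto
    then show ?thesis using sB C unfolding sat_def by simp
  next
    case False
    then have "{l\<in>C. lit_true (mix T A B) l} = {l\<in>C. lit_true A l}"
      by (auto simp: lit_true_def mix_def)
    then show ?thesis using sA C unfolding sat_def by simp
  qed
qed

lemma connected_snoc:
  assumes "xs \<noteq> []" "hd xs = A"
    "\<forall>X\<in>set xs. X \<in> assignments n \<and> sat X \<Phi>"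
    "\<forall>i < length xs - 1. real (hamming n (xs ! i) (xs ! Suc i)) \<le> l"
    "Y \<in> assignments n" "sat Y \<Phi>" "real (hamming n (last xs) Y) \<le> l"
  shows "(xs @ [Y]) \<noteq> [] \<and> hd (xs @ [Y]) = A \<and> last (xs @ [Y]) = Y \<and>
    (\<forall>X\<in>set (xs @ [Y]). X \<in> assignments n \<and> sat X \<Phi>) \<and>
    (\<forall>i < length (xs @ [Y]) - 1. real (hamming n ((xs @ [Y]) ! i) ((xs @ [Y]) ! Suc i)) \<le> l)"
proof -
  have "real (hamming n ((xs @ [Y]) ! i) ((xs @ [Y]) ! Suc i)) \<le> l" if i: "i < length xs" for i
  proof (cases "i < length xs - 1")
    case True
    then have "Suc i < length xs" by arith
    then show ?thesis using assms(4) True by (simp add: nth_append)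
  next
    case False
    then have "i = length xs - 1" using i by auto
    then show ?thesis using assms(1,7) i by (simp add: nth_append last_conv_nth)
  qed
  then show ?thesis using assms by auto
qed

lemma path_mix:
  assumes D: "D = {i. i < n \<and> A i \<noteq> B i}"
    and \<Phi>: "\<Phi> \<subseteq> clauses n k" and sA: "sat A \<Phi>" and sB: "sat B \<Phi>"
    and aA: "A \<in> assignments n" and aB: "B \<in> assignments n"
    and small: "\<forall>v\<in>D. real (card (reach \<Phi> D {v})) \<le> l"
  shows "T \<subseteq> D \<Longrightarrow> closedD \<Phi> D T \<Longrightarrow> \<exists>xs. xs \<noteq> [] \<and> hd xs = A \<and> last xs = mix T A B \<and>
        (\<forall>X\<in>set xs. X \<in> assignments n \<and> sat X \<Phi>) \<and>
        (\<forall>i < length xs - 1. real (hamming n (xs ! i) (xs ! Suc i)) \<le> l)"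
proof (induction "card T" arbitrary: T rule: less_induct)
  case less
  have finD: "finite D" unfolding D by auto
  have fT: "finite T" using less.prems finD finite_subset by auto
  have amix: "mix T' A B \<in> assignments n" for T' using aA aB by (auto simp: assignments_def mix_def)
  show ?case
  proof (cases "T = {}")
    case True
    have "mix T A B = A" using True by (auto simp: mix_def)
    then show ?thesis using sA aA by (intro exI[of _ "[A]"]) auto
  next
    case False
    then obtain v where v: "v \<in> T" by blast
    define K where "K = reach \<Phi> D {v}"
    have KD: "K \<subseteq> D" using reach_sub[of \<Phi> D "{v}"] v less.prems(1) unfolding K_def by auto
    have vK: "v \<in> K" unfolding K_def reach_def by auto
    have KT: "K \<subseteq> T"
    proof
      fix w assume "w \<in> K"
      then have "(rel \<Phi> D)\<^sup>*\<^sup>* v w" unfolding K_def reach_def by auto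
      then show "w \<in> T"
        by (induction rule: rtranclp_induct) (use v less.prems(2) in \<open>auto simp: rel_def closedD_def\<close>)
    qed
    have cl': "closedD \<Phi> D (T - K)"
      unfolding closedD_def
    proof (intro ballI impI)
      fix a b assume a: "a \<in> T - K" and b: "b \<in> D" and ab: "adj \<Phi> a b"
      have "b \<in> T" using less.prems(2) a b ab unfolding closedD_def by auto
      moreover have "b \<notin> K"
      proof
        assume "b \<in> K"
        then have "(rel \<Phi> D)\<^sup>*\<^sup>* v b" unfolding K_def reach_def by auto
        moreover have "rel \<Phi> D b a" using a b ab less.prems(1) adj_sym unfolding rel_def by blast
        ultimately have "a \<in> K" unfolding K_def reach_def by (auto intro: rtranclp.rtrancl_into_rtrancl)
        then show False using a by auto
      qed
      ultimately show "b \<in> T - K" by auto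
    qed
    have "card (T - K) < card T" using fT vK v KT by (intro psubset_card_mono) auto
    then obtain xs where xs: "xs \<noteq> []" "hd xs = A" "last xs = mix (T - K) A B"
        "\<forall>X\<in>set xs. X \<in> assignments n \<and> sat X \<Phi>"
        "\<forall>i < length xs - 1. real (hamming n (xs ! i) (xs ! Suc i)) \<le> l"
      using less.hyps[of "T - K"] less.prems cl' by auto
    have "{i. i < n \<and> mix (T - K) A B i \<noteq> mix T A B i} = K"
    proof (intro set_eqI iffI)
      fix i assume "i \<in> {i. i < n \<and> mix (T - K) A B i \<noteq> mix T A B i}"
      then show "i \<in> K" unfolding mix_def by (cases "i \<in> T"; cases "i \<in> K") auto
    next
      fix i assume "i \<in> K"
      then have "i \<in> T" "i < n" "A i \<noteq> B i" using KD KT unfolding D by auto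
      then show "i \<in> {i. i < n \<and> mix (T - K) A B i \<noteq> mix T A B i}" using \<open>i \<in> K\<close> unfolding mix_def by auto
    qed
    then have "hamming n (last xs) (mix T A B) = card K" unfolding hamming_def xs(3) by simp
    moreover have "real (card K) \<le> l" using small v less.prems(1) unfolding K_def by auto
    ultimately have "real (hamming n (last xs) (mix T A B)) \<le> l" by simp
    moreover have "sat (mix T A B) \<Phi>" by (rule sat_mix[OF D less.prems(1,2) \<Phi> sA sB])
    ultimately show ?thesis using connected_snoc[OF xs(1,2,4,5) amix] by blast
  qed
qed

lemma connected_of_small:
  assumes D: "D = {i. i < n \<and> A i \<noteq> B i}"
    and \<Phi>: "\<Phi> \<subseteq> clauses n k" and sA: "sat A \<Phi>" and sB: "sat B \<Phi>"
    and aA: "A \<in> assignments n" and aB: "B \<in> assignments n"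
    and small: "\<forall>v\<in>D. real (card (reach \<Phi> D {v})) \<le> l"
  shows "connected n \<Phi> l A B"
proof -
  have "closedD \<Phi> D D" unfolding closedD_def by auto
  from path_mix[OF assms order_refl this] obtain xs where xs: "xs \<noteq> [] \<and> hd xs = A \<and> last xs = mix D A B \<and>
        (\<forall>X\<in>set xs. X \<in> assignments n \<and> sat X \<Phi>) \<and>
        (\<forall>i < length xs - 1. real (hamming n (xs ! i) (xs ! Suc i)) \<le> l)" by blast
  have "mix D A B i = B i" for i
  proof (cases "i < n")
    case True then show ?thesis unfolding D mix_def by auto
  next
    case False then show ?thesis using aA aB unfolding D mix_def assignments_def by auto
  qed
  then have "mix D A B = B" by auto
  then show ?thesis using xs unfolding connected_def by auto
qed



definition Yset :: "nat \<Rightarrow> nat \<Rightarrow> (nat \<Rightarrow> bool) \<Rightarrow> (nat \<Rightarrow> bool) \<Rightarrow> (nat \<times> bool) set set" where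
  "Yset n k A B = {C\<in>clauses n k. card {l\<in>C. lit_true A l} = 1 \<and> card {l\<in>C. lit_true B l} = 1}"

definition om :: "real \<Rightarrow> nat \<times> bool \<Rightarrow> real" where
  "om \<epsilon> l = (if snd l then 1 - \<epsilon> else \<epsilon>)"

lemma sum_UN_le_nonneg:
  fixes f :: "'a \<Rightarrow> real"
  assumes "finite I" "\<And>i. i \<in> I \<Longrightarrow> finite (A i)" "\<And>x. 0 \<le> f x"
  shows "sum f (\<Union>i\<in>I. A i) \<le> (\<Sum>i\<in>I. sum f (A i))"
  using assms
proof (induction I rule: finite_induct)
  case empty then show ?case by simp
next
  case (insert i I)
  have fU: "finite (\<Union>i\<in>I. A i)" using insert by auto
  have "sum f (\<Union>j\<in>insert i I. A j) = sum f (A i \<union> (\<Union>j\<in>I. A j))" by simp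
  also have "\<dots> = sum f (A i) + sum f (\<Union>j\<in>I. A j) - sum f (A i \<inter> (\<Union>j\<in>I. A j))"
    using insert fU by (intro sum_Un) auto
  also have "\<dots> \<le> sum f (A i) + sum f (\<Union>j\<in>I. A j)"
    using insert by (simp add: sum_nonneg)
  also have "\<dots> \<le> sum f (A i) + (\<Sum>j\<in>I. sum f (A j))" using insert by auto
  finally show ?case using insert by simp
qed

lemma finite_clauses: "finite (clauses n k)"
proof -
  have "clauses n k \<subseteq> Pow ({0..<n} \<times> (UNIV :: bool set))" unfolding clauses_def by auto
  then show ?thesis by (rule finite_subset) auto
qed

lemma clause_finite: "C \<in> clauses n k \<Longrightarrow> finite C"
  unfolding clauses_def by (auto intro: finite_subset)

lemma cp_prod:
  assumes "finite C"
  shows "clause_prob p \<epsilon> C = p * (\<Prod>l\<in>C. om \<epsilon> l)"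
proof -
  have "(\<Prod>l\<in>C. om \<epsilon> l) = (\<Prod>l\<in>C \<inter> {l. snd l}. 1 - \<epsilon>) * (\<Prod>l\<in>C \<inter> - {l. snd l}. \<epsilon>)"
    unfolding om_def using assms by (simp add: prod.If_cases)
  also have "\<dots> = (1 - \<epsilon>) ^ card {l\<in>C. snd l} * \<epsilon> ^ card {l\<in>C. \<not> snd l}"
    by (simp add: Int_def Collect_conj_eq[symmetric] Compl_eq)
  finally show ?thesis unfolding clause_prob_def by (simp add: algebra_simps)
qed

lemma lit_A_B:
  assumes D: "i \<in> D" "D = {i. i < n \<and> A i \<noteq> B i}"
  shows "lit_true A (i, s) \<or> lit_true B (i, s)"
  using assms unfolding lit_true_def by auto

lemma two_D:
  assumes C: "C \<in> Yset n k A B" and D: "D = {i. i < n \<and> A i \<noteq> B i}"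
  shows "card (fst ` C \<inter> D) \<le> 2"
proof -
  have fC: "finite C" using C clause_finite unfolding Yset_def by auto
  have "fst ` C \<inter> D \<subseteq> fst ` ({l\<in>C. lit_true A l} \<union> {l\<in>C. lit_true B l})"
  proof
    fix i assume "i \<in> fst ` C \<inter> D"
    then obtain s where "(i, s) \<in> C" "i \<in> D" by force
    then show "i \<in> fst ` ({l\<in>C. lit_true A l} \<union> {l\<in>C. lit_true B l})"
      using lit_A_B[OF _ D, of i s] by force
  qed
  then have "card (fst ` C \<inter> D) \<le> card (fst ` ({l\<in>C. lit_true A l} \<union> {l\<in>C. lit_true B l}))"
    using fC by (intro card_mono) auto
  also have "\<dots> \<le> card ({l\<in>C. lit_true A l} \<union> {l\<in>C. lit_true B l})"
    using fC by (intro card_image_le) auto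
  also have "\<dots> \<le> card {l\<in>C. lit_true A l} + card {l\<in>C. lit_true B l}" by (rule card_Un_le)
  also have "\<dots> = 2" using C unfolding Yset_def by simp
  finally show ?thesis .
qed

lemma other_lits:
  assumes C: "C \<in> Yset n k A B" and l1: "l1 \<in> C" "lit_true A l1" and l2: "l2 \<in> C" "lit_true B l2"
    and l: "l \<in> C" "l \<noteq> l1" "l \<noteq> l2"
  shows "\<not> lit_true A l \<and> \<not> lit_true B l"
proof -
  have fC: "finite C" using C clause_finite unfolding Yset_def by auto
  have cA: "card {l\<in>C. lit_true A l} = 1" and cB: "card {l\<in>C. lit_true B l} = 1" using C unfolding Yset_def by auto
  from cA obtain x where "{l\<in>C. lit_true A l} = {x}" by (rule card_1_singletonE)
  then have "{l\<in>C. lit_true A l} = {l1}" using l1 by auto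
  moreover from cB obtain y where "{l\<in>C. lit_true B l} = {y}" by (rule card_1_singletonE)
  then have "{l\<in>C. lit_true B l} = {l2}" using l2 by auto
  ultimately show ?thesis using l by blast
qed



lemma Zs_card:
  assumes E: "E = {i. i < n \<and> A i = B i}"
    and l1: "lit_true A l1" and l2: "lit_true B l2" and ne: "fst l1 \<noteq> fst l2"
  shows "card {C\<in>Yset n k A B. l1 \<in> C \<and> l2 \<in> C} \<le> card E choose (k - 2)"
proof -
  define Z where "Z = {C\<in>Yset n k A B. l1 \<in> C \<and> l2 \<in> C}"
  define F where "F C = fst ` C - {fst l1, fst l2}" for C :: "(nat \<times> bool) set"
  have finE: "finite E" unfolding E by auto
  have facts: "\<And>l. l \<in> C \<Longrightarrow> l \<noteq> l1 \<Longrightarrow> l \<noteq> l2 \<Longrightarrow> fst l \<notin> {fst l1, fst l2} \<and> snd l = (\<not> A (fst l)) \<and> fst l \<in> E"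
    if C: "C \<in> Z" for C
  proof -
    fix l assume l: "l \<in> C" "l \<noteq> l1" "l \<noteq> l2"
    have CY: "C \<in> Yset n k A B" "l1 \<in> C" "l2 \<in> C" using C unfolding Z_def by auto
    then have inj: "inj_on fst C" and Cn: "C \<subseteq> {0..<n} \<times> UNIV" unfolding Yset_def clauses_def by auto
    have nt: "\<not> lit_true A l \<and> \<not> lit_true B l" using other_lits[OF CY(1) CY(2) l1 CY(3) l2 l] .
    have "fst l \<noteq> fst l1" using inj_onD[OF inj, of l l1] l CY by auto
    moreover have "fst l \<noteq> fst l2" using inj_onD[OF inj, of l l2] l CY by auto
    moreover have "fst l < n" using Cn l by auto
    ultimately show "fst l \<notin> {fst l1, fst l2} \<and> snd l = (\<not> A (fst l)) \<and> fst l \<in> E"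
      using nt unfolding E lit_true_def by auto
  qed
  have repr: "C = {l1, l2} \<union> (\<lambda>i. (i, \<not> A i)) ` F C" if C: "C \<in> Z" for C
  proof
    show "C \<subseteq> {l1, l2} \<union> (\<lambda>i. (i, \<not> A i)) ` F C"
    proof
      fix l assume l: "l \<in> C"
      show "l \<in> {l1, l2} \<union> (\<lambda>i. (i, \<not> A i)) ` F C"
      proof (cases "l = l1 \<or> l = l2")
        case True then show ?thesis by auto
      next
        case False
        then have "fst l \<notin> {fst l1, fst l2}" "snd l = (\<not> A (fst l))" using facts[OF C l] by auto
        then have "fst l \<in> F C" "l = (fst l, \<not> A (fst l))" using l unfolding F_def by (auto simp: prod_eq_iff)
        then show ?thesis by blast
      qed
    qed
    show "{l1, l2} \<union> (\<lambda>i. (i, \<not> A i)) ` F C \<subseteq> C"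
    proof
      fix x assume x: "x \<in> {l1, l2} \<union> (\<lambda>i. (i, \<not> A i)) ` F C"
      show "x \<in> C"
      proof (cases "x \<in> {l1, l2}")
        case True then show ?thesis using C unfolding Z_def by auto
      next
        case False
        then obtain i where i: "i \<in> F C" "x = (i, \<not> A i)" using x by auto
        then obtain l where l: "l \<in> C" "fst l = i" "i \<notin> {fst l1, fst l2}" unfolding F_def by auto
        then have "l \<noteq> l1" "l \<noteq> l2" by auto
        then have "snd l = (\<not> A i)" using facts[OF C l(1)] l by auto
        then have "l = x" using i l by (auto simp: prod_eq_iff)
        then show ?thesis using l by simp
      qed
    qed
  qed
  have "inj_on F Z"
  proof (rule inj_onI)
    fix C C' assume CC: "C \<in> Z" "C' \<in> Z" "F C = F C'"
    show "C = C'" using repr[OF CC(1)] repr[OF CC(2)] CC(3) by simp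
  qed
  moreover have "F ` Z \<subseteq> {V. V \<subseteq> E \<and> card V = k - 2}"
  proof
    fix V assume "V \<in> F ` Z"
    then obtain C where C: "C \<in> Z" "V = F C" by auto
    have CY: "C \<in> Yset n k A B" "l1 \<in> C" "l2 \<in> C" using C unfolding Z_def by auto
    then have inj: "inj_on fst C" and ck: "card C = k"
      unfolding Yset_def clauses_def by auto
    have fC: "finite C" using CY(1) clause_finite unfolding Yset_def by auto
    have VE: "V \<subseteq> E"
    proof
      fix i assume "i \<in> V"
      then obtain l where "l \<in> C" "fst l = i" "i \<notin> {fst l1, fst l2}" using C unfolding F_def by auto
      then show "i \<in> E" using facts[OF C(1), of l] by auto
    qed
    have "card (fst ` C) = k" using inj ck by (simp add: card_image)
    moreover have "card {fst l1, fst l2} = 2" using ne by simp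
    moreover have sub: "{fst l1, fst l2} \<subseteq> fst ` C" using CY by auto
    ultimately have "card V = k - 2" unfolding C(2) F_def
      using card_Diff_subset[OF _ sub] by simp
    then show "V \<in> {V. V \<subseteq> E \<and> card V = k - 2}" using VE by auto
  qed
  ultimately have "card Z \<le> card {V. V \<subseteq> E \<and> card V = k - 2}"
  proof -
    assume a: "inj_on F Z" "F ` Z \<subseteq> {V. V \<subseteq> E \<and> card V = k - 2}"
    have "card Z = card (F ` Z)" using card_image[OF a(1)] by simp
    also have "\<dots> \<le> card {V. V \<subseteq> E \<and> card V = k - 2}"
      by (rule card_mono[OF _ a(2)]) (use finE in simp)
    finally show ?thesis .
  qed
  also have "\<dots> = card E choose (k - 2)" by (rule n_subsets[OF finE])
  finally show ?thesis unfolding Z_def .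
qed

lemma Zs_sum:
  assumes E: "E = {i. i < n \<and> A i = B i}"
    and l1: "lit_true A l1" and l2: "lit_true B l2" and ne: "fst l1 \<noteq> fst l2"
    and p: "0 \<le> p" and eps: "0 \<le> \<epsilon>" "\<epsilon> \<le> 1/2"
  shows "(\<Sum>C\<in>{C\<in>Yset n k A B. l1 \<in> C \<and> l2 \<in> C}. clause_prob p \<epsilon> C)
    \<le> real (card E choose (k - 2)) * (p * om \<epsilon> l1 * om \<epsilon> l2 * (1 - \<epsilon>) ^ (k - 2))"
proof -
  define Z where "Z = {C\<in>Yset n k A B. l1 \<in> C \<and> l2 \<in> C}"
  have omb: "0 \<le> om \<epsilon> l" "om \<epsilon> l \<le> 1 - \<epsilon>" for l using eps unfolding om_def by auto
  have each: "clause_prob p \<epsilon> C \<le> p * om \<epsilon> l1 * om \<epsilon> l2 * (1 - \<epsilon>) ^ (k - 2)" if C: "C \<in> Z" for C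
  proof -
    have CY: "C \<in> clauses n k" "l1 \<in> C" "l2 \<in> C" using C unfolding Z_def Yset_def by auto
    then have fC: "finite C" and ck: "card C = k" by (auto intro: clause_finite simp: clauses_def)
    have l12: "l1 \<noteq> l2" using ne by auto
    have "(\<Prod>l\<in>C. om \<epsilon> l) = (\<Prod>l\<in>C - {l1, l2}. om \<epsilon> l) * (\<Prod>l\<in>{l1, l2}. om \<epsilon> l)"
      using CY fC by (intro prod.subset_diff) auto
    also have "\<dots> = (\<Prod>l\<in>C - {l1, l2}. om \<epsilon> l) * (om \<epsilon> l1 * om \<epsilon> l2)" using l12 by simp
    also have "\<dots> \<le> (\<Prod>l\<in>C - {l1, l2}. (1 - \<epsilon>)) * (om \<epsilon> l1 * om \<epsilon> l2)"
      using omb by (intro mult_right_mono prod_mono) (auto intro: mult_nonneg_nonneg)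
    also have "(\<Prod>l\<in>C - {l1, l2}. (1 - \<epsilon>)) = (1 - \<epsilon>) ^ (k - 2)"
    proof -
      have "card {l1, l2} = 2" using l12 by simp
      moreover have sub: "{l1, l2} \<subseteq> C" using CY by auto
      ultimately have "card (C - {l1, l2}) = k - 2" using ck card_Diff_subset[OF _ sub] by simp
      then show ?thesis by simp
    qed
    finally have "(\<Prod>l\<in>C. om \<epsilon> l) \<le> (1 - \<epsilon>) ^ (k - 2) * (om \<epsilon> l1 * om \<epsilon> l2)" .
    then have "p * (\<Prod>l\<in>C. om \<epsilon> l) \<le> p * ((1 - \<epsilon>) ^ (k - 2) * (om \<epsilon> l1 * om \<epsilon> l2))"
      using p by (rule mult_left_mono)
    then show ?thesis using cp_prod[OF fC] by (simp add: algebra_simps)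
  qed
  have "(\<Sum>C\<in>Z. clause_prob p \<epsilon> C) \<le> real (card Z) * (p * om \<epsilon> l1 * om \<epsilon> l2 * (1 - \<epsilon>) ^ (k - 2))"
    using each by (rule sum_bounded_above)
  also have "\<dots> \<le> real (card E choose (k - 2)) * (p * om \<epsilon> l1 * om \<epsilon> l2 * (1 - \<epsilon>) ^ (k - 2))"
    using Zs_card[OF E l1 l2 ne, of k] p omb eps
    by (intro mult_right_mono) (auto simp: Z_def intro!: mult_nonneg_nonneg)
  finally show ?thesis unfolding Z_def .
qed



lemma cp_nonneg: "0 \<le> p \<Longrightarrow> 0 \<le> \<epsilon> \<Longrightarrow> \<epsilon> \<le> 1 \<Longrightarrow> 0 \<le> clause_prob p \<epsilon> C"
  unfolding clause_prob_def by auto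

lemma finite_Yset: "finite (Yset n k A B)"
  using finite_clauses unfolding Yset_def by auto

lemma pair_split:
  assumes C: "C \<in> Yset n k A B" and D: "D = {i. i < n \<and> A i \<noteq> B i}"
    and uw: "u \<in> fst ` C" "w \<in> fst ` C" "u \<in> D" "w \<in> D" "u \<noteq> w"
  shows "C \<in> {C\<in>Yset n k A B. (u, A u) \<in> C \<and> (w, \<not> A w) \<in> C} \<union> {C\<in>Yset n k A B. (w, A w) \<in> C \<and> (u, \<not> A u) \<in> C}"
proof -
  obtain a b where ab: "(u, a) \<in> C" "(w, b) \<in> C" using uw by force
  have cA: "card {l\<in>C. lit_true A l} = 1" and cB: "card {l\<in>C. lit_true B l} = 1" using C unfolding Yset_def by auto
  from cA obtain x where x: "{l\<in>C. lit_true A l} = {x}" by (rule card_1_singletonE)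
  from cB obtain y where y: "{l\<in>C. lit_true B l} = {y}" by (rule card_1_singletonE)
  have BA: "B u = (\<not> A u)" "B w = (\<not> A w)" using uw D by auto
  show ?thesis
  proof (cases "a = A u")
    case True
    have "b \<noteq> A w"
    proof
      assume "b = A w"
      then have "(u, a) \<in> {l\<in>C. lit_true A l}" "(w, b) \<in> {l\<in>C. lit_true A l}"
        using ab True by (auto simp: lit_true_def)
      then have "(u, a) = x \<and> (w, b) = x" unfolding x by simp
      then have "u = w" by (metis fst_conv)
      then show False using uw(5) by simp
    qed
    then show ?thesis using ab C True by auto
  next
    case False
    have "b \<noteq> B w"
    proof
      assume "b = B w"
      then have "(u, a) \<in> {l\<in>C. lit_true B l}" "(w, b) \<in> {l\<in>C. lit_true B l}"
        using ab False BA by (auto simp: lit_true_def)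
      then have "(u, a) = y \<and> (w, b) = y" unfolding y by simp
      then have "u = w" by (metis fst_conv)
      then show False using uw(5) by simp
    qed
    then have "b = A w" "a = (\<not> A u)" using BA False by auto
    then show ?thesis using ab C by auto
  qed
qed

lemma om_bracket:
  assumes eps: "0 \<le> \<epsilon>" "\<epsilon> \<le> 1/2"
  shows "om \<epsilon> (u, a) * om \<epsilon> (w, \<not> b) + om \<epsilon> (w, b) * om \<epsilon> (u, \<not> a)
     \<le> max (4 * \<epsilon> * (1 - \<epsilon>)) (\<epsilon>^2 + (1 - \<epsilon>)^2)"
proof -
  have h: "0 \<le> \<epsilon> * (1 - \<epsilon>)" using eps by auto
  have m1: "2 * (\<epsilon> * (1 - \<epsilon>)) \<le> max (4 * \<epsilon> * (1 - \<epsilon>)) (\<epsilon>^2 + (1 - \<epsilon>)^2)"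
    using h by (simp add: le_max_iff_disj)
  have m2: "(1 - \<epsilon>) * (1 - \<epsilon>) + \<epsilon> * \<epsilon> \<le> max (4 * \<epsilon> * (1 - \<epsilon>)) (\<epsilon>^2 + (1 - \<epsilon>)^2)"
    by (simp add: le_max_iff_disj power2_eq_square)
  show ?thesis
  proof (cases a)
    case True
    then show ?thesis
    proof (cases b)
      case True then show ?thesis using \<open>a\<close> m1 unfolding om_def by (simp add: algebra_simps)
    next
      case False then show ?thesis using \<open>a\<close> m2 unfolding om_def by simp
    qed
  next
    case False
    then show ?thesis
    proof (cases b)
      case True then show ?thesis using \<open>\<not> a\<close> m2 unfolding om_def by (simp add: algebra_simps)
    next
      case False then show ?thesis using \<open>\<not> a\<close> m1 unfolding om_def by (simp add: algebra_simps)
    qed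
  qed
qed

lemma degree_bound:
  assumes D: "D = {i. i < n \<and> A i \<noteq> B i}" and E: "E = {i. i < n \<and> A i = B i}"
    and u: "u \<in> D" and p: "0 \<le> p" and eps: "0 \<le> \<epsilon>" "\<epsilon> \<le> 1/2"
  shows "(\<Sum>C\<in>{C\<in>Yset n k A B. u \<in> fst ` C \<and> (\<exists>w\<in>D-{u}. w \<in> fst ` C)}. clause_prob p \<epsilon> C)
    \<le> real (card D) * (real (card E choose (k - 2)) * (p * max (4 * \<epsilon> * (1 - \<epsilon>)) (\<epsilon>^2 + (1 - \<epsilon>)^2) * (1 - \<epsilon>) ^ (k - 2)))"
proof -
  define M where "M = max (4 * \<epsilon> * (1 - \<epsilon>)) (\<epsilon>^2 + (1 - \<epsilon>)^2)"
  define Z1 where "Z1 w = {C\<in>Yset n k A B. (u, A u) \<in> C \<and> (w, \<not> A w) \<in> C}" for w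
  define Z2 where "Z2 w = {C\<in>Yset n k A B. (w, A w) \<in> C \<and> (u, \<not> A u) \<in> C}" for w
  define bnd where "bnd = real (card E choose (k - 2)) * (p * M * (1 - \<epsilon>) ^ (k - 2))"
  have finD: "finite D" unfolding D by auto
  have nn: "0 \<le> clause_prob p \<epsilon> C" for C using cp_nonneg p eps by auto
  have fZ: "finite (Z1 w)" "finite (Z2 w)" for w using finite_Yset unfolding Z1_def Z2_def by auto
  have sub: "{C\<in>Yset n k A B. u \<in> fst ` C \<and> (\<exists>w\<in>D-{u}. w \<in> fst ` C)} \<subseteq> (\<Union>w\<in>D-{u}. Z1 w \<union> Z2 w)"
  proof
    fix C assume "C \<in> {C\<in>Yset n k A B. u \<in> fst ` C \<and> (\<exists>w\<in>D-{u}. w \<in> fst ` C)}"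
    then obtain w where w: "C \<in> Yset n k A B" "u \<in> fst ` C" "w \<in> D - {u}" "w \<in> fst ` C" by auto
    have "C \<in> Z1 w \<union> Z2 w" unfolding Z1_def Z2_def
      by (rule pair_split[OF w(1) D w(2) w(4) u]) (use w(3) in auto)
    then show "C \<in> (\<Union>w\<in>D-{u}. Z1 w \<union> Z2 w)" using w(3) by blast
  qed
  have pw: "sum (clause_prob p \<epsilon>) (Z1 w \<union> Z2 w) \<le> bnd" if w: "w \<in> D - {u}" for w
  proof -
    have BA: "B u = (\<not> A u)" "B w = (\<not> A w)" using u w D by auto
    have "sum (clause_prob p \<epsilon>) (Z1 w \<union> Z2 w) \<le> sum (clause_prob p \<epsilon>) (Z1 w) + sum (clause_prob p \<epsilon>) (Z2 w)"
      using fZ nn by (simp add: sum_Un sum_nonneg)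
    also have "sum (clause_prob p \<epsilon>) (Z1 w) \<le> real (card E choose (k - 2)) * (p * om \<epsilon> (u, A u) * om \<epsilon> (w, \<not> A w) * (1 - \<epsilon>) ^ (k - 2))"
      unfolding Z1_def using w BA by (intro Zs_sum[OF E _ _ _ p eps]) (auto simp: lit_true_def)
    also have "sum (clause_prob p \<epsilon>) (Z2 w) \<le> real (card E choose (k - 2)) * (p * om \<epsilon> (w, A w) * om \<epsilon> (u, \<not> A u) * (1 - \<epsilon>) ^ (k - 2))"
      unfolding Z2_def using w BA by (intro Zs_sum[OF E _ _ _ p eps]) (auto simp: lit_true_def)
    also have "real (card E choose (k - 2)) * (p * om \<epsilon> (u, A u) * om \<epsilon> (w, \<not> A w) * (1 - \<epsilon>) ^ (k - 2))
       + real (card E choose (k - 2)) * (p * om \<epsilon> (w, A w) * om \<epsilon> (u, \<not> A u) * (1 - \<epsilon>) ^ (k - 2))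
       = real (card E choose (k - 2)) * p * (1 - \<epsilon>) ^ (k - 2) *
          (om \<epsilon> (u, A u) * om \<epsilon> (w, \<not> A w) + om \<epsilon> (w, A w) * om \<epsilon> (u, \<not> A u))"
      by (simp add: algebra_simps)
    also have "\<dots> \<le> real (card E choose (k - 2)) * p * (1 - \<epsilon>) ^ (k - 2) * M"
      unfolding M_def using p eps by (intro mult_left_mono om_bracket) auto
    finally show ?thesis unfolding bnd_def by (simp add: algebra_simps)
  qed
  have "(\<Sum>C\<in>{C\<in>Yset n k A B. u \<in> fst ` C \<and> (\<exists>w\<in>D-{u}. w \<in> fst ` C)}. clause_prob p \<epsilon> C)
       \<le> sum (clause_prob p \<epsilon>) (\<Union>w\<in>D-{u}. Z1 w \<union> Z2 w)"
    using sub fZ finD nn by (intro sum_mono2) auto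
  also have "\<dots> \<le> (\<Sum>w\<in>D-{u}. sum (clause_prob p \<epsilon>) (Z1 w \<union> Z2 w))"
    using finD fZ nn by (intro sum_UN_le_nonneg) auto
  also have "\<dots> \<le> (\<Sum>w\<in>D-{u}. bnd)" using pw by (rule sum_mono)
  also have "\<dots> = real (card (D - {u})) * bnd" by simp
  also have "\<dots> \<le> real (card D) * bnd"
  proof -
    have "0 \<le> M" unfolding M_def by (simp add: le_max_iff_disj)
    then have "0 \<le> bnd" unfolding bnd_def using p eps by (intro mult_nonneg_nonneg) auto
    moreover have "card (D - {u}) \<le> card D" using finD by (simp add: card_mono)
    ultimately show ?thesis by (intro mult_right_mono) auto
  qed
  finally show ?thesis unfolding bnd_def M_def .
qed



lemma fact_choose_lower:
  assumes "k \<le> n"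
  shows "real (n - k) ^ k \<le> fact k * real (n choose k)"
proof -
  have "(n - k) ^ k = (\<Prod>i\<in>{n - k..<n}. n - k)" using assms by simp
  also have "\<dots> \<le> (\<Prod>i\<in>{n - k..<n}. Suc i)" by (intro prod_mono) auto
  finally have 1: "real (n - k) ^ k \<le> real (\<Prod>i\<in>{n - k..<n}. Suc i)" by (metis of_nat_le_iff of_nat_power)
  have "fact k * real (n choose k) = fact n / fact (n - k)" by (rule fact_binomial[OF assms])
  also have "\<dots> = real (\<Prod>i\<in>{n - k..<n}. Suc i)"
  proof -
    have h: "fact n = real (\<Prod>i\<in>{n - k..<n}. Suc i) * fact (n - k)" by (rule fact_split[OF assms])
    have "fact (n - k) \<noteq> (0::real)" by simp
    then show ?thesis using h by (metis nonzero_mult_div_cancel_right)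
  qed
  finally show ?thesis using 1 by simp
qed

lemma choose2_fact:
  assumes "k \<ge> 2"
  shows "real (k choose 2) * 2 * fact (k - 2) = fact k"
  using binomial_fact[OF assms, where 'a=real] by (simp add: field_simps)

lemma numeric:
  fixes n d e k :: nat and c \<epsilon> M p :: real
  assumes k: "k \<ge> 3" and nk: "n > k" and c: "0 < c" "c < 1" and M: "M > 0"
    and p: "p * real (n choose k) = (1 / M) * (c / real (k choose 2)) * real n"
    and de: "d + e = n"
    and ov: "2 * ((real e / real n) * (1 - \<epsilon>)) ^ (k - 2) \<le> 1"
    and eps: "0 \<le> \<epsilon>" "\<epsilon> \<le> 1/2"
    and big: "real n \<ge> real k ^ 2 * (1 + c) / (1 - c)"
  shows "real d * (real (e choose (k - 2)) * (p * M * (1 - \<epsilon>) ^ (k - 2))) \<le> (1 + c) / 2"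
proof -
  define N where "N = real n"
  define K where "K = real k"
  have Npos: "N > 0" using nk unfolding N_def by auto
  have Bpos: "real (n choose k) > 0" using nk by simp
  have C2pos: "real (k choose 2) > 0" using k by simp
  have fk2: "fact (k - 2) > (0::real)" by simp
  have pM: "p * M = c * N / (real (k choose 2) * real (n choose k))"
    using p M Bpos C2pos unfolding N_def by (simp add: field_simps)
  have b1: "real (e choose (k - 2)) * fact (k - 2) \<le> real e ^ (k - 2)"
    using binomial_fact_pow[of e "k - 2"] by (metis of_nat_fact of_nat_le_iff of_nat_mult of_nat_power)
  have ov2: "2 * (real e * (1 - \<epsilon>)) ^ (k - 2) \<le> N ^ (k - 2)"
  proof -
    have "2 * (real e * (1 - \<epsilon>)) ^ (k - 2) = 2 * ((real e / N) * (1 - \<epsilon>)) ^ (k - 2) * N ^ (k - 2)"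
      using Npos by (simp add: power_mult_distrib[symmetric] field_simps)
    also have "\<dots> \<le> 1 * N ^ (k - 2)" using ov Npos unfolding N_def by (intro mult_right_mono) auto
    finally show ?thesis by simp
  qed
  have dN: "real d \<le> N" using de unfolding N_def by simp
  have eps1: "0 \<le> 1 - \<epsilon>" using eps by simp
  have "real d * (real (e choose (k - 2)) * (p * M * (1 - \<epsilon>) ^ (k - 2)))
      = real d * (c * N / (real (k choose 2) * real (n choose k))) * (real (e choose (k - 2)) * (1 - \<epsilon>) ^ (k - 2))"
    by (subst pM[symmetric]) (simp add: algebra_simps)
  also have "\<dots> \<le> real d * (c * N / (real (k choose 2) * real (n choose k))) * (real e ^ (k - 2) / fact (k - 2) * (1 - \<epsilon>) ^ (k - 2))"
  proof (intro mult_left_mono mult_right_mono)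
    show "real (e choose (k - 2)) \<le> real e ^ (k - 2) / fact (k - 2)" using b1 fk2 by (simp add: field_simps)
  qed (use c Npos Bpos C2pos eps1 in auto)
  also have "\<dots> = real d * (c * N / (real (k choose 2) * real (n choose k))) * ((real e * (1 - \<epsilon>)) ^ (k - 2) / fact (k - 2))"
    by (simp add: power_mult_distrib)
  also have "\<dots> \<le> real d * (c * N / (real (k choose 2) * real (n choose k))) * (N ^ (k - 2) / (2 * fact (k - 2)))"
    using ov2 fk2 c Npos Bpos C2pos
    by (intro mult_left_mono) (auto simp: field_simps)
  also have "\<dots> = c * real d * N ^ (k - 1) / (real (k choose 2) * 2 * fact (k - 2) * real (n choose k))"
  proof -
    obtain j where j: "k = j + 3" using k by (metis add.commute le_Suc_ex)
    have "N * N ^ (k - 2) = N ^ (k - 1)" unfolding j by (simp add: numeral_3_eq_3)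
    then show ?thesis by (simp add: field_simps)
  qed
  also have "\<dots> = c * real d * N ^ (k - 1) / (fact k * real (n choose k))"
    using choose2_fact[of k] k by simp
  also have "\<dots> \<le> c * N * N ^ (k - 1) / (fact k * real (n choose k))"
    using dN c Npos Bpos by (intro divide_right_mono mult_right_mono mult_left_mono) auto
  also have "c * N * N ^ (k - 1) = c * N ^ k"
  proof -
    obtain j where j: "k = j + 3" using k by (metis add.commute le_Suc_ex)
    show ?thesis unfolding j by (simp add: numeral_3_eq_3)
  qed
  also have "c * N ^ k / (fact k * real (n choose k)) \<le> c * N ^ k / real (n - k) ^ k"
    using fact_choose_lower[of k n] nk c Npos by (intro divide_left_mono) auto
  also have "c * N ^ k / real (n - k) ^ k = c / (1 - K / N) ^ k"
  proof -
    have "real (n - k) = N * (1 - K / N)" using nk Npos unfolding N_def K_def by (simp add: field_simps of_nat_diff)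
    then show ?thesis using Npos by (simp add: power_mult_distrib)
  qed
  also have "\<dots> \<le> c / (1 - K ^ 2 / N)"
  proof -
    have KN: "K / N \<le> 1" using nk Npos unfolding N_def K_def by simp
    have "1 + real k * (- (K / N)) \<le> (1 + - (K / N)) ^ k" by (rule Bernoulli_inequality) (use KN in auto)
    then have bern: "1 - K ^ 2 / N \<le> (1 - K / N) ^ k" unfolding K_def by (simp add: power2_eq_square)
    have "K ^ 2 * (1 + c) / (1 - c) \<le> N" using big unfolding N_def K_def by simp
    then have "K ^ 2 * (1 + c) \<le> N * (1 - c)" using c by (simp add: field_simps)
    have "N * (1 - c) < N * (1 + c)" using Npos c by (intro mult_strict_left_mono) auto
    then have "K ^ 2 * (1 + c) < N * (1 + c)" using \<open>K ^ 2 * (1 + c) \<le> N * (1 - c)\<close> by linarith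
    then have "K ^ 2 < N" using c by (simp add: mult_less_cancel_right)
    then have pos: "0 < 1 - K ^ 2 / N" using Npos by (simp add: field_simps)
    show ?thesis using bern pos c by (intro divide_left_mono) auto
  qed
  also have "\<dots> \<le> (1 + c) / 2"
  proof -
    have "K ^ 2 * (1 + c) / (1 - c) \<le> N" using big unfolding N_def K_def by simp
    then have h: "K ^ 2 * (1 + c) \<le> N * (1 - c)" using c by (simp add: field_simps)
    have "N * (1 - c) < N * (1 + c)" using Npos c by (intro mult_strict_left_mono) auto
    then have "K ^ 2 * (1 + c) < N * (1 + c)" using h by linarith
    then have "K ^ 2 < N" using c by (simp add: mult_less_cancel_right)
    then have pos: "0 < 1 - K ^ 2 / N" using Npos by (simp add: field_simps)
    have "2 * c \<le> (1 + c) * (1 - K ^ 2 / N)" using h Npos c by (simp add: field_simps)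
    then show ?thesis using pos by (simp add: field_simps)
  qed
  finally show ?thesis .
qed



lemma cond_reduce:
  assumes q01: "\<forall>C\<in>clauses n k. 0 \<le> clause_prob p \<epsilon> C \<and> clause_prob p \<epsilon> C \<le> 1"
  shows "cond_prob_inst n k p \<epsilon> E (\<lambda>\<Phi>. sat A \<Phi> \<and> sat B \<Phi>)
     \<le> (\<Sum>\<Phi>\<in>{\<Phi>\<in>Pow (Yset n k A B). E \<Phi>}. wt (clause_prob p \<epsilon>) (Yset n k A B) \<Phi>)"
proof -
  define X where "X = clauses n k"
  define Y where "Y = Yset n k A B"
  define q where "q = clause_prob p \<epsilon>"
  define Kf where "Kf = (\<Prod>C\<in>X - Y. 1 - q C)"
  define P where "P = (\<Sum>\<Phi>\<in>{\<Phi>\<in>Pow Y. E \<Phi>}. wt q Y \<Phi>)"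
  have YX: "Y \<subseteq> X" unfolding X_def Y_def Yset_def by auto
  have fX: "finite X" unfolding X_def by (rule finite_clauses)
  have fY: "finite Y" using YX fX finite_subset by auto
  have qY: "\<And>C. C \<in> Y \<Longrightarrow> 0 \<le> q C \<and> q C \<le> 1" using q01 YX unfolding q_def X_def by auto
  have s1: "{\<Phi>. \<Phi> \<subseteq> X \<and> (E \<Phi> \<and> (sat A \<Phi> \<and> sat B \<Phi>))} = {\<Phi>\<in>Pow Y. E \<Phi>}"
    unfolding X_def Y_def Yset_def sat_def by auto
  have s2: "{\<Phi>. \<Phi> \<subseteq> X \<and> (sat A \<Phi> \<and> sat B \<Phi>)} = Pow Y"
    unfolding X_def Y_def Yset_def sat_def by auto
  have inst: "instance_prob n k p \<epsilon> \<Phi> = wt q Y \<Phi> * Kf" if "\<Phi> \<subseteq> Y" for \<Phi>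
  proof -
    have e: "X - \<Phi> = (Y - \<Phi>) \<union> (X - Y)" using that YX by auto
    have "(\<Prod>C\<in>X - \<Phi>. 1 - q C) = (\<Prod>C\<in>Y - \<Phi>. 1 - q C) * Kf"
      unfolding Kf_def e by (rule prod.union_disjoint) (use fX fY in auto)
    then show ?thesis unfolding instance_prob_def wt_def X_def[symmetric] q_def[symmetric] by simp
  qed
  have num: "prob_inst n k p \<epsilon> (\<lambda>\<Phi>. E \<Phi> \<and> (sat A \<Phi> \<and> sat B \<Phi>)) = P * Kf"
    unfolding prob_inst_def X_def[symmetric] s1 P_def sum_distrib_right using inst by (intro sum.cong) auto
  have den: "prob_inst n k p \<epsilon> (\<lambda>\<Phi>. sat A \<Phi> \<and> sat B \<Phi>) = Kf"
  proof -
    have "prob_inst n k p \<epsilon> (\<lambda>\<Phi>. sat A \<Phi> \<and> sat B \<Phi>) = (\<Sum>\<Phi>\<in>Pow Y. wt q Y \<Phi>) * Kf"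
      unfolding prob_inst_def X_def[symmetric] s2 sum_distrib_right using inst by (intro sum.cong) auto
    then show ?thesis using wt_sum1[OF fY] by simp
  qed
  have P0: "0 \<le> P" unfolding P_def using qY by (intro sum_nonneg wt_nonneg) auto
  have "cond_prob_inst n k p \<epsilon> E (\<lambda>\<Phi>. sat A \<Phi> \<and> sat B \<Phi>) = P * Kf / Kf"
    unfolding cond_prob_inst_def num den by simp
  also have "\<dots> \<le> P" using P0 by (cases "Kf = 0") auto
  finally show ?thesis unfolding P_def q_def Y_def .
qed

lemma fail_bound:
  assumes D: "D = {i. i < n \<and> A i \<noteq> B i}" and aA: "A \<in> assignments n" and aB: "B \<in> assignments n"
    and H: "hyps D \<mu> q (Yset n k A B)"
    and G: "G \<ge> 1" and x: "x \<ge> 1" and xG: "x * exp (\<mu> * (G - 1)) \<le> G"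
  shows "(\<Sum>\<Phi>\<in>{\<Phi>\<in>Pow (Yset n k A B). \<not> connected n \<Phi> l A B}. wt q (Yset n k A B) \<Phi>)
      \<le> real (card D) * G / x powr l"
proof -
  define Y where "Y = Yset n k A B"
  have finD: "finite D" unfolding D by auto
  have fY: "finite Y" unfolding Y_def by (rule finite_Yset)
  have qY: "\<And>C. C \<in> Y \<Longrightarrow> 0 \<le> q C \<and> q C \<le> 1" using H unfolding hyps_def Y_def by auto
  have wnn: "\<Phi> \<in> Pow Y \<Longrightarrow> 0 \<le> wt q Y \<Phi>" for \<Phi> using qY by (intro wt_nonneg) auto
  have xp: "x powr l > 0" using x by simp
  define f where "f \<Phi> = (\<Sum>v\<in>D. x ^ card (reach \<Phi> D {v}) / x powr l)" for \<Phi>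
  have f0: "0 \<le> f \<Phi>" for \<Phi> unfolding f_def using x xp by (intro sum_nonneg) auto
  have f1: "1 \<le> f \<Phi>" if "\<Phi> \<in> Pow Y" "\<not> connected n \<Phi> l A B" for \<Phi>
  proof -
    have "\<Phi> \<subseteq> clauses n k" "sat A \<Phi>" "sat B \<Phi>" using that(1) unfolding Y_def Yset_def sat_def by auto
    then have "\<not> (\<forall>v\<in>D. real (card (reach \<Phi> D {v})) \<le> l)"
      using connected_of_small[OF D _ _ _ aA aB] that(2) by blast
    then obtain v where v: "v \<in> D" "l < real (card (reach \<Phi> D {v}))" by auto
    have "x powr l \<le> x powr real (card (reach \<Phi> D {v}))" using x v by (intro powr_mono) auto
    also have "\<dots> = x ^ card (reach \<Phi> D {v})" using x by (simp add: powr_realpow)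
    finally have "1 \<le> x ^ card (reach \<Phi> D {v}) / x powr l" using xp by simp
    also have "\<dots> \<le> f \<Phi>" unfolding f_def using finD v x xp
      by (intro member_le_sum) auto
    finally show ?thesis .
  qed
  have "(\<Sum>\<Phi>\<in>{\<Phi>\<in>Pow Y. \<not> connected n \<Phi> l A B}. wt q Y \<Phi>)
      \<le> (\<Sum>\<Phi>\<in>{\<Phi>\<in>Pow Y. \<not> connected n \<Phi> l A B}. wt q Y \<Phi> * f \<Phi>)"
  proof (intro sum_mono)
    fix \<Phi> assume "\<Phi> \<in> {\<Phi>\<in>Pow Y. \<not> connected n \<Phi> l A B}"
    then have "1 \<le> f \<Phi>" "0 \<le> wt q Y \<Phi>" using f1 wnn by auto
    then show "wt q Y \<Phi> \<le> wt q Y \<Phi> * f \<Phi>" using mult_left_mono[of 1 "f \<Phi>" "wt q Y \<Phi>"] by simp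
  qed
  also have "\<dots> \<le> (\<Sum>\<Phi>\<in>Pow Y. wt q Y \<Phi> * f \<Phi>)"
    using fY wnn f0 by (intro sum_mono2) auto
  also have "\<dots> = (\<Sum>v\<in>D. (\<Sum>\<Phi>\<in>Pow Y. wt q Y \<Phi> * x ^ card (reach \<Phi> D {v})) / x powr l)"
    unfolding f_def by (simp add: sum_distrib_left sum_divide_distrib sum.swap[of _ D] algebra_simps)
  also have "\<dots> \<le> (\<Sum>v\<in>D. G / x powr l)"
  proof (intro sum_mono divide_right_mono)
    fix v assume "v \<in> D"
    then show "(\<Sum>\<Phi>\<in>Pow Y. wt q Y \<Phi> * x ^ card (reach \<Phi> D {v})) \<le> G"
      using moment[OF finD G _ xG, of q Y D "{v}"] H x unfolding Y_def by auto
  qed (use xp in auto)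
  also have "\<dots> = real (card D) * G / x powr l" by simp
  finally show ?thesis unfolding Y_def .
qed



theorem theorem2:
  fixes k :: nat and \<epsilon> c r :: real and p :: "nat \<Rightarrow> real"
  assumes k: "k \<ge> 3"
    and eps: "0 \<le> \<epsilon>" "\<epsilon> \<le> 1/2"
    and c: "0 < c" "c < 1"
    and r_def: "r = (1 / max (4 * \<epsilon> * (1 - \<epsilon>)) (\<epsilon>^2 + (1 - \<epsilon>)^2)) * (c / real (k choose 2))"
    and p_def: "\<And>n. n \<ge> k \<Longrightarrow> p n * real (n choose k) = r * real n"
  shows "\<exists>lam>0. \<forall>A B :: nat \<Rightarrow> nat \<Rightarrow> bool.
           (\<forall>n. A n \<in> assignments n \<and> B n \<in> assignments n \<and>
                 2 * (overlap n (A n) (B n) * (1 - \<epsilon>)) ^ (k - 2) \<le> 1) \<longrightarrow>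
           (\<forall>\<^sub>F n in sequentially.
              cond_prob_inst n k (p n) \<epsilon>
                (\<lambda>\<Phi>. \<not> connected n \<Phi> (lam * ln (real n)) (A n) (B n))
                (\<lambda>\<Phi>. sat (A n) \<Phi> \<and> sat (B n) \<Phi>) < 1 / real n)"
proof -
  define M where "M = max (4 * \<epsilon> * (1 - \<epsilon>)) (\<epsilon>^2 + (1 - \<epsilon>)^2)"
  define \<mu> where "\<mu> = (1 + c) / 2"
  define \<eta> where "\<eta> = (1 - \<mu>) / 2"
  define G where "G = 1 + \<eta>"
  define x where "x = G / exp (\<mu> * \<eta>)"
  define lam where "lam = 3 / ln x"
  have M0: "M > 0"
  proof -
    have "0 < (1 - \<epsilon>)^2" using eps by simp
    then have "0 < \<epsilon>^2 + (1 - \<epsilon>)^2" by (simp add: add_nonneg_pos)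
    then show ?thesis unfolding M_def by (simp add: less_max_iff_disj)
  qed
  have r: "r = (1 / M) * (c / real (k choose 2))" unfolding r_def M_def ..
  have C2pos: "real (k choose 2) > 0" using k by simp
  have r0: "r \<ge> 0" unfolding r using M0 c C2pos by simp
  have \<mu>: "0 < \<mu>" "\<mu> < 1" unfolding \<mu>_def using c by auto
  have \<eta>: "0 < \<eta>" "\<eta> \<le> 1" unfolding \<eta>_def using \<mu> by auto
  have G1: "G \<ge> 1" unfolding G_def using \<eta> by simp
  have lnx: "ln x > 0"
  proof -
    have Gp: "G > 0" using G1 by simp
    have "ln x = ln G - \<mu> * \<eta>" unfolding x_def using Gp by (simp add: ln_div)
    moreover have "\<eta> - \<eta>^2 \<le> ln G" unfolding G_def using ln_one_plus_pos_lower_bound[OF _ \<eta>(2)] \<eta> by simp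
    moreover have "\<eta> - \<eta>^2 - \<mu> * \<eta> = \<eta> * \<eta>" unfolding \<eta>_def by (simp add: power2_eq_square field_simps)
    moreover have "\<eta> * \<eta> > 0" using \<eta> by simp
    ultimately show ?thesis by linarith
  qed
  have xpos: "x > 0" unfolding x_def using G1 by simp
  have x1: "x \<ge> 1" using lnx xpos by (meson ln_le_zero_iff not_le less_imp_le)
  have xG: "x * exp (\<mu> * (G - 1)) \<le> G" unfolding x_def G_def by simp
  have lam: "lam > 0" unfolding lam_def using lnx by simp
  show ?thesis
  proof (intro exI[of _ lam] conjI allI impI)
    show "lam > 0" by (rule lam)
    fix A B :: "nat \<Rightarrow> nat \<Rightarrow> bool"
    assume hAB: "\<forall>n. A n \<in> assignments n \<and> B n \<in> assignments n \<and>
                 2 * (overlap n (A n) (B n) * (1 - \<epsilon>)) ^ (k - 2) \<le> 1"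
    define N0 where "N0 = max (max (real k ^ 2 * (1 + c) / (1 - c)) (r * real k ^ 2)) G"
    define Nn where "Nn = nat \<lceil>N0\<rceil> + k + 2"
    show "\<forall>\<^sub>F n in sequentially.
              cond_prob_inst n k (p n) \<epsilon>
                (\<lambda>\<Phi>. \<not> connected n \<Phi> (lam * ln (real n)) (A n) (B n))
                (\<lambda>\<Phi>. sat (A n) \<Phi> \<and> sat (B n) \<Phi>) < 1 / real n"
      unfolding eventually_sequentially
    proof (intro exI[of _ Nn] allI impI)
      fix n assume nN: "Nn \<le> n"
      have nk: "n > k" using nN unfolding Nn_def by simp
      have n2: "n \<ge> 2" using nN unfolding Nn_def by simp
      have nN0: "real n > N0"
      proof -
        have "N0 \<le> real (nat \<lceil>N0\<rceil>)" by linarith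
        then show ?thesis using nN unfolding Nn_def by linarith
      qed
      have big: "real n \<ge> real k ^ 2 * (1 + c) / (1 - c)" using nN0 unfolding N0_def by linarith
      have bigr: "real n \<ge> r * real k ^ 2" using nN0 unfolding N0_def by linarith
      have bigG: "real n > G" using nN0 unfolding N0_def by linarith
      have npos: "real n > 0" using nk by simp
      have Bpos: "real (n choose k) > 0" using nk by simp
      have pn: "p n * real (n choose k) = r * real n" using p_def nk by simp
      have p0: "p n \<ge> 0"
      proof -
        have "p n = r * real n / real (n choose k)" using pn Bpos by (simp add: field_simps)
        then show ?thesis using r0 npos Bpos by simp
      qed
      have p1: "p n \<le> 1"
      proof -
        have "(real n / real k) ^ 2 \<le> (real n / real k) ^ k"
          using nk k by (intro power_increasing) auto
        also have "\<dots> \<le> real (n choose k)" using binomial_ge_n_over_k_pow_k[of k n] nk by simp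
        finally have h: "(real n / real k) ^ 2 \<le> real (n choose k)" .
        have "r * real n \<le> (real n / real k) ^ 2"
        proof -
          have kp: "real k > 0" using k by simp
          have "real n * (r * real k ^ 2) \<le> real n * real n"
            using bigr npos by (intro mult_left_mono) auto
          then have "r * real n * real k ^ 2 \<le> real n * real n" by (simp add: algebra_simps)
          then show ?thesis using kp by (simp add: field_simps power2_eq_square)
        qed
        then have "p n * real (n choose k) \<le> 1 * real (n choose k)" using pn h by simp
        then show ?thesis using Bpos by (simp add: mult_le_cancel_right)
      qed
      define q where "q = clause_prob (p n) \<epsilon>"
      have q01: "\<forall>C\<in>clauses n k. 0 \<le> q C \<and> q C \<le> 1"
      proof
        fix C :: "(nat \<times> bool) set"
        have "\<epsilon> ^ card {l\<in>C. \<not> snd l} \<le> 1" "(1 - \<epsilon>) ^ card {l\<in>C. snd l} \<le> 1"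
          using eps by (auto intro: power_le_one)
        moreover have "0 \<le> \<epsilon> ^ card {l\<in>C. \<not> snd l}" "0 \<le> (1 - \<epsilon>) ^ card {l\<in>C. snd l}" using eps by auto
        ultimately have "\<epsilon> ^ card {l\<in>C. \<not> snd l} * (1 - \<epsilon>) ^ card {l\<in>C. snd l} \<le> 1"
          by (simp add: mult_le_one)
        then have "p n * (\<epsilon> ^ card {l\<in>C. \<not> snd l} * (1 - \<epsilon>) ^ card {l\<in>C. snd l}) \<le> p n * 1"
          using p0 by (rule mult_left_mono)
        then have "q C \<le> p n * 1" unfolding q_def clause_prob_def by (simp add: mult.assoc)
        then show "0 \<le> q C \<and> q C \<le> 1" using p1 p0 eps cp_nonneg[of "p n" \<epsilon> C] unfolding q_def by auto
      qed
      define D where "D = {i. i < n \<and> A n i \<noteq> B n i}"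
      define E where "E = {i. i < n \<and> A n i = B n i}"
      have de: "card D + card E = n"
      proof -
        have "D \<union> E = {..<n}" "D \<inter> E = {}" unfolding D_def E_def by auto
        moreover have "finite D" "finite E" unfolding D_def E_def by auto
        ultimately have "card (D \<union> E) = card D + card E" by (intro card_Un_disjoint) auto
        then show ?thesis using \<open>D \<union> E = {..<n}\<close> by simp
      qed
      have ovl: "overlap n (A n) (B n) = real (card E) / real n" unfolding overlap_def E_def ..
      have ov: "2 * ((real (card E) / real n) * (1 - \<epsilon>)) ^ (k - 2) \<le> 1" using hAB[rule_format, of n] unfolding ovl by blast
      have H: "hyps D \<mu> q (Yset n k (A n) (B n))"
        unfolding hyps_def
      proof (intro conjI ballI)
        show "finite (Yset n k (A n) (B n))" by (rule finite_Yset)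
      next
        fix C assume "C \<in> Yset n k (A n) (B n)"
        then show "0 \<le> q C" "q C \<le> 1" using q01 unfolding Yset_def by auto
      next
        fix C assume "C \<in> Yset n k (A n) (B n)"
        then show "card (fst ` C \<inter> D) \<le> 2" using two_D D_def by blast
      next
        fix u assume u: "u \<in> D"
        have "(\<Sum>C\<in>{C\<in>Yset n k (A n) (B n). u \<in> fst ` C \<and> (\<exists>w\<in>D-{u}. w \<in> fst ` C)}. q C)
           \<le> real (card D) * (real (card E choose (k - 2)) * (p n * M * (1 - \<epsilon>) ^ (k - 2)))"
          unfolding q_def M_def by (rule degree_bound[OF D_def E_def u p0 eps])
        also have "\<dots> \<le> (1 + c) / 2"
          by (rule numeric[OF k nk c M0 _ de ov eps big]) (use pn r in \<open>simp add: algebra_simps\<close>)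
        finally show "(\<Sum>C\<in>{C\<in>Yset n k (A n) (B n). u \<in> fst ` C \<and> (\<exists>w\<in>D-{u}. w \<in> fst ` C)}. q C) \<le> \<mu>"
          unfolding \<mu>_def .
      qed
      have aA: "A n \<in> assignments n" and aB: "B n \<in> assignments n" using hAB by auto
      have "cond_prob_inst n k (p n) \<epsilon> (\<lambda>\<Phi>. \<not> connected n \<Phi> (lam * ln (real n)) (A n) (B n))
                (\<lambda>\<Phi>. sat (A n) \<Phi> \<and> sat (B n) \<Phi>)
          \<le> (\<Sum>\<Phi>\<in>{\<Phi>\<in>Pow (Yset n k (A n) (B n)). \<not> connected n \<Phi> (lam * ln (real n)) (A n) (B n)}.
               wt q (Yset n k (A n) (B n)) \<Phi>)"
        unfolding q_def by (rule cond_reduce) (use q01 in \<open>simp add: q_def\<close>)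
      also have "\<dots> \<le> real (card D) * G / x powr (lam * ln (real n))"
        by (rule fail_bound[OF D_def aA aB H G1 x1 xG])
      also have "x powr (lam * ln (real n)) = real n ^ 3"
      proof -
        have "x powr (lam * ln (real n)) = exp (lam * ln (real n) * ln x)" using xpos by (simp add: powr_def)
        also have "\<dots> = exp (3 * ln (real n))" unfolding lam_def using lnx by simp
        also have "\<dots> = real n powr 3" using npos by (simp add: powr_def)
        also have "\<dots> = real n ^ 3" using npos by (simp add: powr_realpow)
        finally show ?thesis .
      qed
      also have "real (card D) * G / real n ^ 3 \<le> real n * G / real n ^ 3"
        using de G1 npos by (intro divide_right_mono mult_right_mono) auto
      also have "real n * G / real n ^ 3 < 1 / real n"
        using bigG npos by (simp add: field_simps power3_eq_cube power2_eq_square)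
      finally show "cond_prob_inst n k (p n) \<epsilon> (\<lambda>\<Phi>. \<not> connected n \<Phi> (lam * ln (real n)) (A n) (B n))
                (\<lambda>\<Phi>. sat (A n) \<Phi> \<and> sat (B n) \<Phi>) < 1 / real n" .
    qed
  qed
qed

end
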